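(* Let $(G,\rho)$ be a ribbon graph and $v\in V(G)$ with $\rho_v=(e_1,\dots,e_{i+j})$, $i,j\ge1$. Assume that for all $1\le k\le i$ and $i+1\le l\le i+j$, the edges $e_k$ and $e_l$ lie in different $v$-components of $(G,\rho)$. Let $(G',\rho')$ be the union of all $v$-components containing some edge of $\{e_1,\dots,e_i\}$ and $(G'',\rho'')$ the union of all $v$-components containing some edge of $\{e_{i+1},\dots,e_{i+j}\}$, with cyclic orders restricted from $\rho$. Then the genus of $(G,\rho)$ equals the genus of $(G',\rho')$ plus the genus of $(G'',\rho'')$.
   Context: Graphs are finite, connected, loopless, possibly with multiple edges. A ribbon graph $(G,\rho)$ assigns to each vertex $u$ a cyclic order $\rho_u$ on incident edges. For a vertex $v$, a $v$-component is the full ribbon subgraph induced on the vertices of a connected component of $G\setminus v$ together with $v$. Genus: a cycle of a ribbon graph is a closed walk which, whenever it enters a vertex $u$ along an edge $e$, leaves along the edge following $e$ in $\rho_u$; with $\operatorname{cyc}$ the number of cycles, the genus $g$ satisfies $2g=2-|V|+|E|-\operatorname{cyc}$. *)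

theory Defs
  imports Complex_Main
begin

text \<open>A (multi)graph is given by a vertex set V, an edge set E and an endpoint map
  ends :: 'e => 'v set (loopless: every edge has exactly two distinct endpoints).
  A rotation system rho assigns to each vertex u a successor function rho u on edges;
  on the edges incident to u it must be a single cyclic permutation.\<close>

definition incident :: "'e set \<Rightarrow> ('e \<Rightarrow> 'v set) \<Rightarrow> 'v \<Rightarrow> 'e set" where
  "incident E ends u = {e \<in> E. u \<in> ends e}"

definition adj_rel :: "'v set \<Rightarrow> 'e set \<Rightarrow> ('e \<Rightarrow> 'v set) \<Rightarrow> ('v \<times> 'v) set" where
  "adj_rel V E ends = {(u, w). u \<in> V \<and> w \<in> V \<and> (\<exists>e\<in>E. ends e = {u, w})}"

definition graph :: "'v set \<Rightarrow> 'e set \<Rightarrow> ('e \<Rightarrow> 'v set) \<Rightarrow> bool" where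
  "graph V E ends \<longleftrightarrow> finite V \<and> finite E \<and> V \<noteq> {} \<and>
     (\<forall>e\<in>E. ends e \<subseteq> V \<and> card (ends e) = 2)"

definition connected_graph :: "'v set \<Rightarrow> 'e set \<Rightarrow> ('e \<Rightarrow> 'v set) \<Rightarrow> bool" where
  "connected_graph V E ends \<longleftrightarrow> graph V E ends \<and>
     (\<forall>u\<in>V. \<forall>w\<in>V. (u, w) \<in> (adj_rel V E ends)\<^sup>*)"

definition cyclic_order_on :: "'e set \<Rightarrow> ('e \<Rightarrow> 'e) \<Rightarrow> bool" where
  "cyclic_order_on A r \<longleftrightarrow> bij_betw r A A \<and> (\<forall>e\<in>A. \<forall>e'\<in>A. \<exists>n. (r ^^ n) e = e')"

definition ribbon_graph ::
  "'v set \<Rightarrow> 'e set \<Rightarrow> ('e \<Rightarrow> 'v set) \<Rightarrow> ('v \<Rightarrow> 'e \<Rightarrow> 'e) \<Rightarrow> bool" where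
  "ribbon_graph V E ends rho \<longleftrightarrow> connected_graph V E ends \<and>
     (\<forall>u\<in>V. cyclic_order_on (incident E ends u) (rho u))"

text \<open>Darts: an edge together with one of its endpoints; (e,u) means
  "the walk has arrived at u along e".\<close>
definition darts :: "'e set \<Rightarrow> ('e \<Rightarrow> 'v set) \<Rightarrow> ('e \<times> 'v) set" where
  "darts E ends = {(e, u). e \<in> E \<and> u \<in> ends e}"

definition other_end :: "('e \<Rightarrow> 'v set) \<Rightarrow> 'e \<Rightarrow> 'v \<Rightarrow> 'v" where
  "other_end ends e u = (THE w. w \<in> ends e \<and> w \<noteq> u)"

definition face_step ::
  "('e \<Rightarrow> 'v set) \<Rightarrow> ('v \<Rightarrow> 'e \<Rightarrow> 'e) \<Rightarrow> 'e \<times> 'v \<Rightarrow> 'e \<times> 'v" where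
  "face_step ends rho d = (let u = snd d; e' = rho u (fst d) in (e', other_end ends e' u))"

definition face_orbit ::
  "('e \<Rightarrow> 'v set) \<Rightarrow> ('v \<Rightarrow> 'e \<Rightarrow> 'e) \<Rightarrow> 'e \<times> 'v \<Rightarrow> ('e \<times> 'v) set" where
  "face_orbit ends rho d = {(face_step ends rho ^^ n) d | n. True}"

text \<open>Number of cycles (faces) of the ribbon graph.\<close>
definition cyc :: "'e set \<Rightarrow> ('e \<Rightarrow> 'v set) \<Rightarrow> ('v \<Rightarrow> 'e \<Rightarrow> 'e) \<Rightarrow> nat" where
  "cyc E ends rho = card (face_orbit ends rho ` darts E ends)"

definition genus ::
  "'v set \<Rightarrow> 'e set \<Rightarrow> ('e \<Rightarrow> 'v set) \<Rightarrow> ('v \<Rightarrow> 'e \<Rightarrow> 'e) \<Rightarrow> real" where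
  "genus V E ends rho = (2 - real (card V) + real (card E) - real (cyc E ends rho)) / 2"

definition restrict_cyclic :: "'e set \<Rightarrow> ('e \<Rightarrow> 'e) \<Rightarrow> 'e \<Rightarrow> 'e" where
  "restrict_cyclic A r e = (r ^^ (LEAST k. k > 0 \<and> (r ^^ k) e \<in> A)) e"

definition comp_vertex_sets :: "'v set \<Rightarrow> 'e set \<Rightarrow> ('e \<Rightarrow> 'v set) \<Rightarrow> 'v \<Rightarrow> 'v set set" where
  "comp_vertex_sets V E ends v =
     (let V0 = V - {v}; E0 = {e \<in> E. v \<notin> ends e}
      in {{w \<in> V0. (u, w) \<in> (adj_rel V0 E0 ends)\<^sup>*} | u. u \<in> V0})"

text \<open>The v-component with vertex-set C \<union> {v} (C a component of G - v) is the full
  subgraph induced on C \<union> {v}; here its vertex and edge sets.\<close>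
definition vcomp_vertices :: "'v \<Rightarrow> 'v set \<Rightarrow> 'v set" where
  "vcomp_vertices v C = insert v C"

definition vcomp_edges :: "'e set \<Rightarrow> ('e \<Rightarrow> 'v set) \<Rightarrow> 'v \<Rightarrow> 'v set \<Rightarrow> 'e set" where
  "vcomp_edges E ends v C = {e \<in> E. ends e \<subseteq> insert v C}"

definition v_components :: "'v set \<Rightarrow> 'e set \<Rightarrow> ('e \<Rightarrow> 'v set) \<Rightarrow> 'v \<Rightarrow> ('v set \<times> 'e set) set" where
  "v_components V E ends v =
     (\<lambda>C. (vcomp_vertices v C, vcomp_edges E ends v C)) ` comp_vertex_sets V E ends v"

definition union_vcomps_containing ::
  "'v set \<Rightarrow> 'e set \<Rightarrow> ('e \<Rightarrow> 'v set) \<Rightarrow> 'v \<Rightarrow> 'e set \<Rightarrow> 'v set \<times> 'e set" where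
  "union_vcomps_containing V E ends v F =
     (let K = {H \<in> v_components V E ends v. \<exists>e\<in>F. e \<in> snd H}
      in (\<Union>(fst ` K), \<Union>(snd ` K)))"

end

theory Submission
  imports Defs
begin

definition orb :: "('d \<Rightarrow> 'd) \<Rightarrow> 'd \<Rightarrow> 'd set" where
  "orb h x = {(h ^^ n) x | n. True}"

lemma orb_self: "x \<in> orb h x"
  unfolding orb_def by (auto intro: exI[of _ 0])

lemma orb_step: "y \<in> orb h x \<Longrightarrow> h y \<in> orb h x"
proof -
  assume "y \<in> orb h x"
  then obtain n where "y = (h ^^ n) x" unfolding orb_def by auto
  then have "h y = (h ^^ Suc n) x" by simp
  then show ?thesis unfolding orb_def by blast
qed

lemma orb_pow: "(h ^^ n) x \<in> orb h x"
  unfolding orb_def by auto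

lemma orb_sub:
  assumes "x \<in> S" "\<And>z. z \<in> S \<Longrightarrow> h z \<in> S"
  shows "orb h x \<subseteq> S"
proof
  fix y assume "y \<in> orb h x"
  then obtain n where y: "y = (h ^^ n) x" unfolding orb_def by auto
  have "(h ^^ n) x \<in> S" by (induction n) (use assms in auto)
  then show "y \<in> S" using y by simp
qed

lemma orb_trans: "y \<in> orb h x \<Longrightarrow> orb h y \<subseteq> orb h x"
  by (rule orb_sub) (auto intro: orb_step)

lemma orb_cong:
  assumes "\<And>z. z \<in> S \<Longrightarrow> h1 z = h2 z" "\<And>z. z \<in> S \<Longrightarrow> h1 z \<in> S" "x \<in> S"
  shows "orb h1 x = orb h2 x"
proof -
  have "(h1 ^^ n) x = (h2 ^^ n) x \<and> (h1 ^^ n) x \<in> S" for n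
    by (induction n) (use assms in auto)
  then show ?thesis unfolding orb_def by auto
qed

lemma funpow_inj_on:
  assumes "inj_on h D" "h ` D \<subseteq> D" "x \<in> D" "y \<in> D" "(h ^^ m) x = (h ^^ m) y"
  shows "x = y"
  using assms(5)
proof (induction m)
  case 0 then show ?case by simp
next
  case (Suc m)
  have "(h ^^ m) x \<in> D" "(h ^^ m) y \<in> D"
    using assms(2-4) by (induction m) auto
  with Suc.prems assms(1) have "(h ^^ m) x = (h ^^ m) y"
    by (auto dest: inj_onD)
  then show ?case by (rule Suc.IH)
qed

lemma funpow_in: "h ` D \<subseteq> D \<Longrightarrow> x \<in> D \<Longrightarrow> (h ^^ m) x \<in> D"
  by (induction m) auto

lemma period:
  assumes "finite D" "inj_on h D" "h ` D \<subseteq> D" "x \<in> D"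
  shows "\<exists>p>0. (h ^^ p) x = x"
proof -
  have "\<not> inj_on (\<lambda>n. (h ^^ n) x) {0..card D}"
  proof
    assume "inj_on (\<lambda>n. (h ^^ n) x) {0..card D}"
    moreover have "(\<lambda>n. (h ^^ n) x) ` {0..card D} \<subseteq> D"
      using funpow_in[OF assms(3,4)] by auto
    ultimately have "card {0..card D} \<le> card D"
      using card_inj_on_le assms(1) by blast
    then show False by simp
  qed
  then obtain m n where mn: "m \<in> {0..card D}" "n \<in> {0..card D}" "m \<noteq> n"
    "(h ^^ m) x = (h ^^ n) x" unfolding inj_on_def by blast
  {
    fix m n assume "m < n" "(h ^^ m) x = (h ^^ n) x"
    then have "(h ^^ m) x = (h ^^ m) ((h ^^ (n - m)) x)"
      by (metis add_diff_inverse_nat funpow_add less_imp_not_less o_apply)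
    then have "x = (h ^^ (n - m)) x"
      using funpow_inj_on[OF assms(2,3,4) funpow_in[OF assms(3,4)]] by blast
    then have "\<exists>p>0. (h ^^ p) x = x" using \<open>m < n\<close> by (intro exI[of _ "n - m"]) auto
  }
  then show ?thesis using mn by (metis linorder_neqE_nat)
qed

lemma orb_sym:
  assumes "finite D" "inj_on h D" "h ` D \<subseteq> D" "x \<in> D" "y \<in> orb h x"
  shows "x \<in> orb h y"
proof -
  obtain p where p: "p > 0" "(h ^^ p) x = x" using period[OF assms(1-4)] by blast
  obtain n where y: "y = (h ^^ n) x" using assms(5) unfolding orb_def by auto
  have pk: "(h ^^ (p * k)) x = x" for k
  proof (induction k)
    case 0 then show ?case by simp
  next
    case (Suc k)
    have "(h ^^ (p * Suc k)) x = (h ^^ p) ((h ^^ (p * k)) x)"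
      by (simp add: funpow_add)
    then show ?case using Suc p by simp
  qed
  have "n \<le> p * n" using p by simp
  then have "(h ^^ (p * n - n)) y = (h ^^ (p * n)) x"
    unfolding y by (metis funpow_add le_add_diff_inverse2 o_apply)
  then show ?thesis using pk orb_pow by metis
qed

lemma orb_eq:
  assumes "finite D" "inj_on h D" "h ` D \<subseteq> D" "x \<in> D" "y \<in> orb h x"
  shows "orb h y = orb h x"
  using orb_trans[OF assms(5)] orb_trans[OF orb_sym[OF assms]] by blast

lemma walk:
  assumes "finite D" "inj_on g D" "g ` D \<subseteq> D" "x \<in> D" "orb g x \<subseteq> S" "y \<notin> S"
    "\<And>z. z \<in> S - {x} \<Longrightarrow> f z = g z" "g x = f y"
  shows "x \<in> orb f y"
proof -
  define p where "p = (LEAST p. p > 0 \<and> (g ^^ p) x = x)"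
  have ex: "\<exists>p. p > 0 \<and> (g ^^ p) x = x" using period[OF assms(1-4)] by blast
  have p: "p > 0" "(g ^^ p) x = x" using LeastI_ex[OF ex] unfolding p_def by auto
  have claim: "m < p \<Longrightarrow> (f ^^ m) (g x) = (g ^^ Suc m) x" for m
  proof (induction m)
    case 0 then show ?case by simp
  next
    case (Suc m)
    define z where "z = (g ^^ Suc m) x"
    have "z \<in> S" using assms(5) orb_pow[where h=g and n="Suc m" and x=x] unfolding z_def by blast
    moreover have "z \<noteq> x"
    proof
      assume "z = x"
      then have "p \<le> Suc m" unfolding p_def z_def by (intro Least_le) simp
      then show False using Suc.prems by simp
    qed
    ultimately have "f z = g z" using assms(7) by blast
    then show ?case using Suc by (simp add: z_def)
  qed
  have "(f ^^ (p - 1)) (g x) = x" using claim[of "p - 1"] p by simp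
  then have "(f ^^ p) y = x" using assms(8) p(1)
    by (metis Suc_diff_1 comp_apply funpow_Suc_right)
  then show ?thesis using orb_pow by metis
qed

lemma merge:
  fixes f g :: "'d \<Rightarrow> 'd"
  assumes fin: "finite D" and fD: "f ` D \<subseteq> D" and finj: "inj_on f D"
    and D12: "D1 \<union> D2 = D" "D1 \<inter> D2 = {}" and ab: "a \<in> D1" "b \<in> D2"
    and ga: "g a = f b" and gb: "g b = f a" and gf: "\<And>x. x \<in> D - {a, b} \<Longrightarrow> g x = f x"
    and g1: "g ` D1 \<subseteq> D1" and g2: "g ` D2 \<subseteq> D2"
  shows "card (orb f ` D) + 1 = card (orb g ` D1) + card (orb g ` D2)"
proof -
  define tau where "tau x = (if x = a then b else if x = b then a else x)" for x
  have aD: "a \<in> D" "b \<in> D" using ab D12 by auto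
  have anb: "a \<noteq> b" using ab D12 by auto
  have gtau: "g x = f (tau x)" if "x \<in> D" for x
    using that ga gb gf unfolding tau_def by auto
  have tauD: "tau x \<in> D" if "x \<in> D" for x using that aD unfolding tau_def by auto
  have gD: "g ` D \<subseteq> D" using g1 g2 D12 by blast
  have ginj: "inj_on g D"
  proof (rule inj_onI)
    fix x y assume xy: "x \<in> D" "y \<in> D" "g x = g y"
    then have "tau x = tau y" using gtau tauD finj by (metis inj_onD)
    then show "x = y" unfolding tau_def using anb by (auto split: if_splits)
  qed
  have Oga: "orb g a \<subseteq> D1" by (rule orb_sub) (use ab g1 in auto)
  have Ogb: "orb g b \<subseteq> D2" by (rule orb_sub) (use ab g2 in auto)
  have fg1: "f z = g z" if "z \<in> D1 - {a}" for z
  proof -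
    have "z \<in> D - {a, b}" using that D12 ab by auto
    then show ?thesis using gf by simp
  qed
  have fg2: "f z = g z" if "z \<in> D2 - {b}" for z
  proof -
    have "z \<in> D - {a, b}" using that D12 ab by auto
    then show ?thesis using gf by simp
  qed
  have a_fb: "a \<in> orb f b"
    by (rule walk[OF fin ginj gD aD(1) Oga]) (use ab D12 fg1 ga in auto)
  have b_fa: "b \<in> orb f a"
    by (rule walk[OF fin ginj gD aD(2) Ogb]) (use ab D12 fg2 gb in auto)
  have OgD: "orb g x \<subseteq> D" if "x \<in> D" for x by (rule orb_sub) (use that gD in auto)
  have OfD: "orb f x \<subseteq> D" if "x \<in> D" for x by (rule orb_sub) (use that fD in auto)
  have Ofa: "orb f a = orb g a \<union> orb g b"
  proof
    show "orb f a \<subseteq> orb g a \<union> orb g b"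
    proof (rule orb_sub)
      fix z assume z: "z \<in> orb g a \<union> orb g b"
      then have "z \<in> D" using OgD aD by blast
      show "f z \<in> orb g a \<union> orb g b"
      proof (cases "z = a \<or> z = b")
        case True then show ?thesis using ga gb orb_step orb_self by (metis UnI1 UnI2)
      next
        case False then have "f z = g z" using gf \<open>z \<in> D\<close> by auto
        then show ?thesis using z orb_step by (metis Un_iff)
      qed
    qed (simp add: orb_self)
    have cl: "g z \<in> orb f a" if z: "z \<in> orb f a" for z
    proof -
      have "z \<in> D" using OfD aD z by blast
      show ?thesis
      proof (cases "z = a \<or> z = b")
        case True then show ?thesis using ga gb orb_step orb_self b_fa z
          by (metis orb_trans subsetD)
      next
        case False then have "f z = g z" using gf \<open>z \<in> D\<close> by auto
        then show ?thesis using z orb_step by metis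
      qed
    qed
    show "orb g a \<union> orb g b \<subseteq> orb f a"
      using orb_sub[of a "orb f a" g, OF orb_self cl] orb_sub[of b "orb f a" g, OF b_fa cl] by blast
  qed
  define T where "T = {orb g x | x. x \<in> D \<and> a \<notin> orb g x \<and> b \<notin> orb g x}"
  have eqT: "orb f x = orb g x" if "x \<in> D" "a \<notin> orb g x" "b \<notin> orb g x" for x
  proof -
    have "orb g x = orb f x"
    proof (rule orb_cong[of "orb g x"])
      fix z assume "z \<in> orb g x"
      then show "g z = f z" using gf OgD[OF that(1)] that by auto
    qed (auto intro: orb_step orb_self)
    then show ?thesis by simp
  qed
  have SF: "orb f ` D = insert (orb f a) T"
  proof (rule set_eqI, rule iffI)
    fix Q assume "Q \<in> orb f ` D"
    then obtain x where x: "x \<in> D" "Q = orb f x" by blast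
    show "Q \<in> insert (orb f a) T"
    proof (cases "a \<in> orb g x \<or> b \<in> orb g x")
      case True
      then have "x \<in> orb g a \<or> x \<in> orb g b"
        using orb_sym[OF fin ginj gD x(1)] by blast
      then have "x \<in> orb f a" using Ofa by blast
      then have "orb f x = orb f a" using orb_eq[OF fin finj fD aD(1)] by blast
      then show ?thesis using x by simp
    next
      case False then show ?thesis using eqT x unfolding T_def by auto
    qed
  next
    fix Q assume "Q \<in> insert (orb f a) T"
    then show "Q \<in> orb f ` D"
    proof
      assume "Q \<in> T"
      then obtain x where "x \<in> D" "a \<notin> orb g x" "b \<notin> orb g x" "Q = orb g x"
        unfolding T_def by blast
      then show ?thesis using eqT by (metis image_eqI)
    qed (use aD in auto)
  qed
  have SG: "orb g ` D = insert (orb g a) (insert (orb g b) T)"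
  proof (rule set_eqI, rule iffI)
    fix Q assume "Q \<in> orb g ` D"
    then obtain x where x: "x \<in> D" "Q = orb g x" by blast
    show "Q \<in> insert (orb g a) (insert (orb g b) T)"
    proof (cases "a \<in> orb g x \<or> b \<in> orb g x")
      case True
      then have "orb g x = orb g a \<or> orb g x = orb g b"
        using orb_eq[OF fin ginj gD x(1)] by metis
      then show ?thesis using x by auto
    next
      case False then show ?thesis using x unfolding T_def by auto
    qed
  next
    fix Q assume "Q \<in> insert (orb g a) (insert (orb g b) T)"
    then show "Q \<in> orb g ` D" using aD unfolding T_def by auto
  qed
  have finT: "finite T"
  proof -
    have "T \<subseteq> orb g ` D" unfolding T_def by auto
    then show ?thesis using fin finite_subset by blast
  qed
  have n1: "orb f a \<notin> T" "orb g a \<notin> T" "orb g b \<notin> T"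
    unfolding T_def using orb_self[of a f] orb_self[of a g] orb_self[of b g] by force+
  have n2: "orb g a \<noteq> orb g b" using Oga orb_self[of b g] ab D12 by blast
  have cF: "card (orb f ` D) = card T + 1" using SF finT n1 by simp
  have cG: "card (orb g ` D) = card T + 2" using SG finT n1 n2 by simp
  have split: "orb g ` D = orb g ` D1 \<union> orb g ` D2" using D12 by blast
  have disj: "orb g ` D1 \<inter> orb g ` D2 = {}"
  proof (rule ccontr)
    assume "orb g ` D1 \<inter> orb g ` D2 \<noteq> {}"
    then obtain x y where xy: "x \<in> D1" "y \<in> D2" "orb g x = orb g y" by blast
    have "orb g x \<subseteq> D1" by (rule orb_sub) (use xy g1 in auto)
    then show False using xy orb_self[of y g] D12 by blast
  qed
  have "card (orb g ` D) = card (orb g ` D1) + card (orb g ` D2)"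
    unfolding split using fin D12 disj by (intro card_Un_disjoint) auto
  then show ?thesis using cF cG by simp
qed


definition RR :: "'v set \<Rightarrow> 'e set \<Rightarrow> ('e \<Rightarrow> 'v set) \<Rightarrow> 'v \<Rightarrow> ('v \<times> 'v) set" where
  "RR V E ends v = adj_rel (V - {v}) {e \<in> E. v \<notin> ends e} ends"

definition vcs :: "'v set \<Rightarrow> 'e set \<Rightarrow> ('e \<Rightarrow> 'v set) \<Rightarrow> 'v \<Rightarrow> 'v \<Rightarrow> 'v set" where
  "vcs V E ends v u = {w \<in> V - {v}. (u, w) \<in> (RR V E ends v)\<^sup>*}"

definition ce :: "'v set \<Rightarrow> 'e set \<Rightarrow> ('e \<Rightarrow> 'v set) \<Rightarrow> 'v \<Rightarrow> 'e \<Rightarrow> 'v set" where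
  "ce V E ends v e = vcs V E ends v (SOME u. u \<in> ends e \<and> u \<noteq> v)"

lemma two_ends:
  assumes "card A = 2" "u \<in> A"
  shows "\<exists>w. A = {u, w} \<and> w \<noteq> u"
  using assms by (auto simp: card_2_iff)

lemma adj_relI: "u \<in> V' \<Longrightarrow> w \<in> V' \<Longrightarrow> e \<in> E' \<Longrightarrow> ends e = {u, w} \<Longrightarrow> (u, w) \<in> adj_rel V' E' ends"
  unfolding adj_rel_def by auto

context
  fixes V :: "'v set" and E :: "'e set" and ends :: "'e \<Rightarrow> 'v set" and v :: 'v
  assumes cg: "connected_graph V E ends" and vV: "v \<in> V"
begin

abbreviation "R \<equiv> RR V E ends v"
abbreviation "cp \<equiv> vcs V E ends v"
abbreviation "CS \<equiv> cp ` (V - {v})"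
abbreviation "cE \<equiv> ce V E ends v"

lemma gr: "finite V" "finite E" "\<And>e. e \<in> E \<Longrightarrow> ends e \<subseteq> V" "\<And>e. e \<in> E \<Longrightarrow> card (ends e) = 2"
  using cg unfolding connected_graph_def graph_def by auto

lemma CS_eq: "comp_vertex_sets V E ends v = CS"
  unfolding comp_vertex_sets_def vcs_def RR_def Let_def by auto

lemma R_sym: "sym R"
  unfolding RR_def adj_rel_def sym_def by (auto simp: insert_commute)

lemma R_in: "(x, y) \<in> R \<Longrightarrow> x \<in> V - {v} \<and> y \<in> V - {v}"
  unfolding RR_def adj_rel_def by auto

lemma comp_sub: "cp u \<subseteq> V - {v}"
  unfolding vcs_def by auto

lemma comp_self: "u \<in> V - {v} \<Longrightarrow> u \<in> cp u"
  unfolding vcs_def by auto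

lemma comp_eq: assumes "w \<in> cp u" shows "cp w = cp u"
proof -
  have uw: "(u, w) \<in> R\<^sup>*" using assms unfolding vcs_def by auto
  then have wu: "(w, u) \<in> R\<^sup>*" using sym_rtrancl[OF R_sym] unfolding sym_def by blast
  show ?thesis unfolding vcs_def using uw wu by (auto intro: rtrancl_trans)
qed

lemma comp_disj: "z \<in> cp u \<Longrightarrow> z \<in> cp w \<Longrightarrow> cp u = cp w"
  using comp_eq by metis

lemma edge_comp:
  assumes "e \<in> E" "u \<in> ends e" "u \<noteq> v"
  shows "ends e \<subseteq> insert v (cp u)"
proof -
  obtain w where w: "ends e = {u, w}" "w \<noteq> u" using two_ends[OF gr(4)[OF assms(1)] assms(2)] by metis
  have uV: "u \<in> V - {v}" using gr(3)[OF assms(1)] assms by auto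
  have wC: "w \<in> insert v (cp u)"
  proof (cases "w = v")
    case True then show ?thesis by simp
  next
    case False
    have wV: "w \<in> V - {v}" using gr(3)[OF assms(1)] w(1) False by blast
    have "e \<in> {e \<in> E. v \<notin> ends e}" using assms(1) w(1) False assms(3) by auto
    then have "(u, w) \<in> R" unfolding RR_def using uV wV w(1) by (intro adj_relI)
    then have "(u, w) \<in> R\<^sup>*" by (rule r_into_rtrancl)
    then have "w \<in> cp u" unfolding vcs_def using wV by simp
    then show ?thesis by simp
  qed
  have "u \<in> cp u" by (rule comp_self[OF uV])
  then show ?thesis using w(1) wC by simp
qed

lemma has_nonv: assumes "e \<in> E" shows "\<exists>u. u \<in> ends e \<and> u \<noteq> v"
proof -
  obtain x y where "ends e = {x, y}" "x \<noteq> y" using gr(4)[OF assms] by (auto simp: card_2_iff)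
  then show ?thesis by (cases "x = v") auto
qed

lemma ce_at:
  assumes "e \<in> E" "u \<in> ends e" "u \<noteq> v"
  shows "cE e = cp u"
proof -
  define x where "x = (SOME u. u \<in> ends e \<and> u \<noteq> v)"
  have x: "x \<in> ends e" "x \<noteq> v" using someI_ex[OF has_nonv[OF assms(1)]] unfolding x_def by auto
  have "u \<in> cp x" using edge_comp[OF assms(1) x] assms by auto
  then have "cp u = cp x" by (rule comp_eq)
  then show ?thesis unfolding ce_def x_def by simp
qed

lemma ce_prop:
  assumes "e \<in> E" shows "cE e \<in> CS" "ends e \<subseteq> insert v (cE e)"
proof -
  obtain u where u: "u \<in> ends e" "u \<noteq> v" using has_nonv[OF assms] by blast
  have "u \<in> V - {v}" using gr(3)[OF assms] u by auto
  then show "cE e \<in> CS" using ce_at[OF assms u] by auto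
  show "ends e \<subseteq> insert v (cE e)" using ce_at[OF assms u] edge_comp[OF assms u] by simp
qed

lemma ce_unique:
  assumes "e \<in> E" "C \<in> CS" "ends e \<subseteq> insert v C"
  shows "C = cE e"
proof -
  obtain u where u: "u \<in> ends e" "u \<noteq> v" using has_nonv[OF assms(1)] by blast
  obtain x where x: "C = cp x" using assms(2) by blast
  have "u \<in> cp x" using u assms(3) x by auto
  then show ?thesis using ce_at[OF assms(1) u] x comp_eq by metis
qed

lemma conn_aux:
  assumes "(v, w) \<in> (adj_rel V E ends)\<^sup>*" "w \<noteq> v"
  shows "\<exists>e \<in> incident E ends v. cE e = cp w"
  using assms
proof (induction rule: rtrancl_induct)
  case base then show ?case by simp
next
  case (step x w)
  obtain e where e: "x \<in> V" "w \<in> V" "e \<in> E" "ends e = {x, w}"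
    using step.hyps(2) unfolding adj_rel_def by auto
  show ?case
  proof (cases "x = v")
    case True
    then have "e \<in> incident E ends v" using e unfolding incident_def by auto
    moreover have "cE e = cp w" using ce_at[OF e(3), of w] e step.prems by auto
    ultimately show ?thesis by blast
  next
    case False
    then obtain e' where e': "e' \<in> incident E ends v" "cE e' = cp x" using step.IH by blast
    have "(x, w) \<in> R" unfolding RR_def adj_rel_def using e False step.prems by auto
    then have "(x, w) \<in> R\<^sup>*" "w \<in> V - {v}" using R_in by auto
    then have "w \<in> cp x" unfolding vcs_def by simp
    then have "cp w = cp x" by (rule comp_eq)
    then show ?thesis using e' by auto
  qed
qed

lemma conn:
  assumes "C \<in> CS" shows "\<exists>e \<in> incident E ends v. cE e = C"
proof -
  obtain w where w: "w \<in> V - {v}" "C = cp w" using assms by blast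
  have "(v, w) \<in> (adj_rel V E ends)\<^sup>*" using cg vV w unfolding connected_graph_def by auto
  moreover have "w \<noteq> v" using w by auto
  ultimately have "\<exists>e \<in> incident E ends v. cE e = cp w" by (rule conn_aux)
  then show ?thesis using w(2) by simp
qed

lemma vcomp_mem:
  assumes "C \<in> CS"
  shows "e \<in> vcomp_edges E ends v C \<longleftrightarrow> e \<in> E \<and> cE e = C"
proof
  assume "e \<in> vcomp_edges E ends v C"
  then have "e \<in> E" "ends e \<subseteq> insert v C" unfolding vcomp_edges_def by auto
  then show "e \<in> E \<and> cE e = C" using ce_unique[OF _ assms] by simp
next
  assume "e \<in> E \<and> cE e = C"
  then show "e \<in> vcomp_edges E ends v C" using ce_prop(2) unfolding vcomp_edges_def by auto
qed

lemma vc_eq: "v_components V E ends v = (\<lambda>C. (insert v C, vcomp_edges E ends v C)) ` CS"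
  unfolding v_components_def CS_eq vcomp_vertices_def by simp

lemma union_char:
  assumes "F \<subseteq> E" "F \<noteq> {}"
  shows "union_vcomps_containing V E ends v F = (insert v (\<Union>(cE ` F)), {e \<in> E. cE e \<in> cE ` F})"
proof -
  define K where "K = {H \<in> v_components V E ends v. \<exists>e\<in>F. e \<in> snd H}"
  have K: "K = (\<lambda>C. (insert v C, vcomp_edges E ends v C)) ` (cE ` F)"
  proof (rule set_eqI, rule iffI)
    fix H assume H: "H \<in> K"
    then obtain C where C: "C \<in> CS" "H = (insert v C, vcomp_edges E ends v C)"
      unfolding K_def vc_eq by blast
    obtain e where "e \<in> F" "e \<in> snd H" using H unfolding K_def by blast
    then have C': "e \<in> F" "e \<in> vcomp_edges E ends v C" using C by auto
    then have "C = cE e" using vcomp_mem[OF C(1)] C' by auto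
    then show "H \<in> (\<lambda>C. (insert v C, vcomp_edges E ends v C)) ` (cE ` F)" using C C' by auto
  next
    fix H assume "H \<in> (\<lambda>C. (insert v C, vcomp_edges E ends v C)) ` (cE ` F)"
    then obtain e where e: "e \<in> F" "H = (insert v (cE e), vcomp_edges E ends v (cE e))" by auto
    have eE: "e \<in> E" using e assms by auto
    have "cE e \<in> CS" using ce_prop[OF eE] by simp
    moreover have "e \<in> vcomp_edges E ends v (cE e)" using vcomp_mem[OF \<open>cE e \<in> CS\<close>] eE by simp
    ultimately show "H \<in> K" unfolding K_def vc_eq using e by auto
  qed
  have 1: "\<Union>(fst ` K) = insert v (\<Union>(cE ` F))" unfolding K using assms(2) by auto
  have 2: "\<Union>(snd ` K) = {e \<in> E. cE e \<in> cE ` F}"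
  proof -
    have "\<Union>(snd ` K) = (\<Union>e\<in>F. vcomp_edges E ends v (cE e))" unfolding K by auto
    also have "\<dots> = {e \<in> E. cE e \<in> cE ` F}"
    proof (rule set_eqI, rule iffI)
      fix x assume "x \<in> (\<Union>e\<in>F. vcomp_edges E ends v (cE e))"
      then obtain e where e: "e \<in> F" "x \<in> vcomp_edges E ends v (cE e)" by blast
      have "cE e \<in> CS" using ce_prop(1) assms(1) e(1) by auto
      then have "x \<in> E \<and> cE x = cE e" using vcomp_mem e(2) by simp
      then show "x \<in> {e \<in> E. cE e \<in> cE ` F}" using e(1) by auto
    next
      fix x assume "x \<in> {e \<in> E. cE e \<in> cE ` F}"
      then obtain e where e: "x \<in> E" "e \<in> F" "cE x = cE e" by auto
      have "cE e \<in> CS" using ce_prop(1) assms(1) e(2) by auto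
      then have "x \<in> vcomp_edges E ends v (cE e)" using vcomp_mem e by simp
      then show "x \<in> (\<Union>e\<in>F. vcomp_edges E ends v (cE e))" using e(2) by blast
    qed
    finally show ?thesis .
  qed
  show ?thesis unfolding union_vcomps_containing_def Let_def K_def[symmetric] 1 2 by simp
qed

end

lemma other_end_prop:
  assumes "card (ends e) = 2" "u \<in> ends e"
  shows "other_end ends e u \<in> ends e" "other_end ends e u \<noteq> u" "ends e = {u, other_end ends e u}"
proof -
  obtain w where w: "ends e = {u, w}" "w \<noteq> u" using two_ends[OF assms] by metis
  have "other_end ends e u = w" unfolding other_end_def w(1)
    by (rule the_equality) (use w(2) in auto)
  then show "other_end ends e u \<in> ends e" "other_end ends e u \<noteq> u" "ends e = {u, other_end ends e u}"
    using w by auto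
qed

lemma restrict_at:
  assumes "0 < m" "(r ^^ m) e \<in> A" "\<And>m'. 0 < m' \<Longrightarrow> m' < m \<Longrightarrow> (r ^^ m') e \<notin> A"
  shows "restrict_cyclic A r e = (r ^^ m) e"
proof -
  have "(LEAST k. k > 0 \<and> (r ^^ k) e \<in> A) = m"
    by (rule Least_equality) (use assms in \<open>auto simp: not_less[symmetric]\<close>)
  then show ?thesis unfolding restrict_cyclic_def by simp
qed

lemma restrict_one: "r e \<in> A \<Longrightarrow> restrict_cyclic A r e = r e"
  using restrict_at[of 1 r e A] by simp

lemma face_orbit_orb: "face_orbit ends rho = orb (face_step ends rho)"
  unfolding face_orbit_def orb_def by (rule ext) simp

lemma face_step_eq: "face_step ends r (e, u) = (r u e, other_end ends (r u e) u)"
  unfolding face_step_def Let_def by simp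

context
  fixes V :: "'v set" and E :: "'e set" and ends :: "'e \<Rightarrow> 'v set"
    and rho :: "'v \<Rightarrow> 'e \<Rightarrow> 'e" and v :: 'v and es :: "'e list" and i j :: nat
    and V1 E1 V2 E2
  assumes rg: "ribbon_graph V E ends rho"
    and vV: "v \<in> V"
    and ij: "i \<ge> 1" "j \<ge> 1"
    and es_len: "length es = i + j"
    and es_dist: "distinct es"
    and es_set: "set es = incident E ends v"
    and es_rot: "\<forall>k < i + j. rho v (es ! k) = es ! (Suc k mod (i + j))"
    and sep: "\<forall>k < i. \<forall>l. i \<le> l \<and> l < i + j \<longrightarrow>
               (\<forall>H \<in> v_components V E ends v. \<not> (es ! k \<in> snd H \<and> es ! l \<in> snd H))"
    and G1: "(V1, E1) = union_vcomps_containing V E ends v (set (take i es))"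
    and G2: "(V2, E2) = union_vcomps_containing V E ends v (set (drop i es))"
begin

abbreviation "ceV \<equiv> ce V E ends v"
abbreviation "cpV \<equiv> vcs V E ends v"
abbreviation "F1 \<equiv> set (take i es)"
abbreviation "F2 \<equiv> set (drop i es)"

lemma cg: "connected_graph V E ends" using rg unfolding ribbon_graph_def by simp

lemma rbij: "u \<in> V \<Longrightarrow> bij_betw (rho u) (incident E ends u) (incident E ends u)"
  using rg unfolding ribbon_graph_def cyclic_order_on_def by simp

lemmas grr = gr[OF cg vV]

lemma mem1: "l < i + j \<Longrightarrow> es ! l \<in> F1 \<longleftrightarrow> l < i"
proof -
  assume l: "l < i + j"
  have "es ! l \<in> F1 \<longleftrightarrow> (\<exists>k < min (length es) i. es ! k = es ! l)"
    by (auto simp: in_set_conv_nth)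
  also have "\<dots> \<longleftrightarrow> l < i" using l es_len nth_eq_iff_index_eq[OF es_dist] by auto
  finally show ?thesis .
qed

lemma mem2: "l < i + j \<Longrightarrow> es ! l \<in> F2 \<longleftrightarrow> i \<le> l"
proof -
  assume l: "l < i + j"
  have "es ! l \<in> F2 \<longleftrightarrow> (\<exists>k < length es - i. es ! (i + k) = es ! l)"
    by (auto simp: in_set_conv_nth)
  also have "\<dots> \<longleftrightarrow> i \<le> l" using l es_len nth_eq_iff_index_eq[OF es_dist]
    by (auto intro!: exI[of _ "l - i"])
  finally show ?thesis .
qed

lemma F1_nth: "e \<in> F1 \<Longrightarrow> \<exists>k < i. e = es ! k"
  using es_len by (auto simp: in_set_conv_nth)

lemma F2_nth: "e \<in> F2 \<Longrightarrow> \<exists>l. i \<le> l \<and> l < i + j \<and> e = es ! l"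
proof -
  assume "e \<in> F2"
  then obtain k where "k < length (drop i es)" "drop i es ! k = e" by (auto simp: in_set_conv_nth)
  then show ?thesis using es_len by (intro exI[of _ "i + k"]) auto
qed

lemma FU: "F1 \<union> F2 = incident E ends v"
  using es_set by (metis append_take_drop_id set_append)

lemma FE: "F1 \<subseteq> E" "F2 \<subseteq> E"
  using FU unfolding incident_def by auto

lemma Fne: "F1 \<noteq> {}" "F2 \<noteq> {}"
  using ij es_len by (auto simp: take_eq_Nil drop_eq_Nil)

lemma sep': assumes "e \<in> F1" "e' \<in> F2" shows "ceV e \<noteq> ceV e'"
proof
  assume eq: "ceV e = ceV e'"
  obtain k where k: "k < i" "e = es ! k" using F1_nth assms(1) by blast
  obtain l where l: "i \<le> l" "l < i + j" "e' = es ! l" using F2_nth assms(2) by blast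
  have eE: "e \<in> E" "e' \<in> E" using FE assms by auto
  have C: "ceV e \<in> vcs V E ends v ` (V - {v})" using ce_prop(1)[OF cg vV eE(1)] .
  define H where "H = (insert v (ceV e), vcomp_edges E ends v (ceV e))"
  have "H \<in> v_components V E ends v" unfolding vc_eq[OF cg vV] H_def using C by blast
  moreover have "e \<in> snd H" "e' \<in> snd H" unfolding H_def
    using vcomp_mem[OF cg vV C] eE eq by auto
  ultimately show False using sep k l by blast
qed

lemma CS_split: "cpV ` (V - {v}) = ceV ` F1 \<union> ceV ` F2"
proof
  show "cpV ` (V - {v}) \<subseteq> ceV ` F1 \<union> ceV ` F2"
  proof
    fix C assume "C \<in> cpV ` (V - {v})"
    then obtain e where "e \<in> incident E ends v" "ceV e = C" using conn[OF cg vV] by blast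
    then show "C \<in> ceV ` F1 \<union> ceV ` F2" using FU by blast
  qed
  show "ceV ` F1 \<union> ceV ` F2 \<subseteq> cpV ` (V - {v})" using ce_prop(1)[OF cg vV] FE by blast
qed

lemma VE1: "V1 = insert v (\<Union>(ceV ` F1))" "E1 = {e \<in> E. ceV e \<in> ceV ` F1}"
  using G1 union_char[OF cg vV FE(1) Fne(1)] by auto

lemma VE2: "V2 = insert v (\<Union>(ceV ` F2))" "E2 = {e \<in> E. ceV e \<in> ceV ` F2}"
  using G2 union_char[OF cg vV FE(2) Fne(2)] by auto

lemma cardV: "card V1 + card V2 = card V + 1"
proof -
  define A1 where "A1 = \<Union>(ceV ` F1)"
  define A2 where "A2 = \<Union>(ceV ` F2)"
  have U: "\<Union>(cpV ` (V - {v})) = V - {v}"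
    using comp_sub[OF cg vV] comp_self[OF cg vV] by blast
  have "A1 \<union> A2 = \<Union>(ceV ` F1 \<union> ceV ` F2)" unfolding A1_def A2_def by simp
  also have "\<dots> = V - {v}" using U CS_split by simp
  finally have A12: "A1 \<union> A2 = V - {v}" .
  have dis: "A1 \<inter> A2 = {}"
  proof (rule ccontr)
    assume "A1 \<inter> A2 \<noteq> {}"
    then obtain z e e' where z: "e \<in> F1" "e' \<in> F2" "z \<in> ceV e" "z \<in> ceV e'"
      unfolding A1_def A2_def by blast
    have "ceV e \<in> cpV ` (V - {v})" using ce_prop(1)[OF cg vV] FE z(1) by auto
    then obtain x where x: "ceV e = cpV x" by (rule imageE)
    have "ceV e' \<in> cpV ` (V - {v})" using ce_prop(1)[OF cg vV] FE z(2) by auto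
    then obtain y where y: "ceV e' = cpV y" by (rule imageE)
    have "ceV e = ceV e'" using comp_disj[OF cg vV] z x y by metis
    then show False using sep' z by blast
  qed
  have fin: "finite A1" "finite A2" using A12 grr(1) by (metis finite_Diff finite_Un)+
  have vn: "v \<notin> A1" "v \<notin> A2" using A12 by auto
  have "card V = Suc (card (V - {v}))" using card_Suc_Diff1[OF grr(1) vV] by simp
  also have "card (V - {v}) = card A1 + card A2" using A12 dis fin card_Un_disjoint by metis
  finally show ?thesis unfolding VE1 VE2 A1_def[symmetric] A2_def[symmetric] using fin vn by simp
qed

lemma E12: "E1 \<union> E2 = E" "E1 \<inter> E2 = {}"
proof -
  show "E1 \<union> E2 = E"
  proof
    show "E \<subseteq> E1 \<union> E2"
    proof
      fix e assume "e \<in> E"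
      then have "ceV e \<in> ceV ` F1 \<union> ceV ` F2" using ce_prop(1)[OF cg vV] CS_split by simp
      then show "e \<in> E1 \<union> E2" unfolding VE1 VE2 using \<open>e \<in> E\<close> by auto
    qed
  qed (auto simp: VE1 VE2)
  show "E1 \<inter> E2 = {}" unfolding VE1 VE2 using sep' by blast
qed

lemma cardE: "card E = card E1 + card E2"
  using E12 grr(2) by (metis card_Un_disjoint finite_Un)

abbreviation "rho1 \<equiv> (\<lambda>u. restrict_cyclic (incident E1 ends u) (rho u))"
abbreviation "rho2 \<equiv> (\<lambda>u. restrict_cyclic (incident E2 ends u) (rho u))"

lemma rot1: "k < i + j \<Longrightarrow> rho v (es ! k) = es ! (Suc k mod (i + j))"
  using es_rot by blast

lemma rot_pow: "k < i + j \<Longrightarrow> (rho v ^^ m) (es ! k) = es ! ((k + m) mod (i + j))"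
proof (induction m)
  case 0 then show ?case by simp
next
  case (Suc m)
  have lt: "(k + m) mod (i + j) < i + j" using ij by simp
  have "(rho v ^^ Suc m) (es ! k) = rho v (es ! ((k + m) mod (i + j)))" using Suc by simp
  also have "\<dots> = es ! (Suc ((k + m) mod (i + j)) mod (i + j))" by (rule rot1[OF lt])
  also have "Suc ((k + m) mod (i + j)) mod (i + j) = (k + Suc m) mod (i + j)"
    by (simp add: mod_Suc_eq)
  finally show ?case .
qed

lemma inc1: "incident E1 ends v = F1"
proof
  show "F1 \<subseteq> incident E1 ends v" using FU FE unfolding VE1 incident_def by auto
  show "incident E1 ends v \<subseteq> F1"
  proof
    fix e assume e: "e \<in> incident E1 ends v"
    then have "e \<in> incident E ends v" "ceV e \<in> ceV ` F1" unfolding VE1 incident_def by auto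
    then show "e \<in> F1" using FU sep' by blast
  qed
qed

lemma inc2: "incident E2 ends v = F2"
proof
  show "F2 \<subseteq> incident E2 ends v" using FU FE unfolding VE2 incident_def by auto
  show "incident E2 ends v \<subseteq> F2"
  proof
    fix e assume e: "e \<in> incident E2 ends v"
    then have "e \<in> incident E ends v" "ceV e \<in> ceV ` F2" unfolding VE2 incident_def by auto
    then show "e \<in> F2" using FU sep' by blast
  qed
qed

lemma inc_gen:
  assumes "e0 \<in> {e \<in> E. ceV e \<in> ceV ` F}" "u \<in> ends e0" "u \<noteq> v"
  shows "incident {e \<in> E. ceV e \<in> ceV ` F} ends u = incident E ends u"
proof -
  have "ceV e0 = cpV u" using ce_at[OF cg vV _ assms(2,3)] assms(1) by auto
  moreover have "ceV e = cpV u" if "e \<in> incident E ends u" for e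
    using ce_at[OF cg vV _ _ assms(3)] that unfolding incident_def by auto
  ultimately show ?thesis using assms(1) unfolding incident_def by auto
qed

lemma R_nonv:
  assumes "(e, u) \<in> darts {e \<in> E. ceV e \<in> ceV ` F} ends" "u \<noteq> v"
  shows "restrict_cyclic (incident {e \<in> E. ceV e \<in> ceV ` F} ends u) (rho u) e = rho u e \<and>
         rho u e \<in> incident {e \<in> E. ceV e \<in> ceV ` F} ends u"
proof -
  have e: "e \<in> {e \<in> E. ceV e \<in> ceV ` F}" "u \<in> ends e" using assms(1) unfolding darts_def by auto
  have uV: "u \<in> V" using grr(3) e by auto
  have "e \<in> incident E ends u" using e unfolding incident_def by auto
  then have "rho u e \<in> incident E ends u" by (rule bij_betw_apply[OF rbij[OF uV]])
  then have "rho u e \<in> incident {e \<in> E. ceV e \<in> ceV ` F} ends u" using inc_gen[OF e assms(2)] by simp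
  then show ?thesis using restrict_one by metis
qed

lemma R1_mid: "k + 1 < i \<Longrightarrow> rho1 v (es ! k) = es ! (k + 1) \<and> rho v (es ! k) = es ! (k + 1)"
proof -
  assume k: "k + 1 < i"
  have r: "rho v (es ! k) = es ! (k + 1)" using rot1[of k] k ij by simp
  have "es ! (k + 1) \<in> incident E1 ends v" unfolding inc1 using mem1[of "k + 1"] k by simp
  then show ?thesis using r restrict_one by metis
qed

lemma R1_last: "rho1 v (es ! (i - 1)) = es ! 0" "rho v (es ! (i + j - 1)) = es ! 0"
proof -
  have "rho1 v (es ! (i - 1)) = (rho v ^^ (j + 1)) (es ! (i - 1))"
  proof (rule restrict_at)
    have "(rho v ^^ (j + 1)) (es ! (i - 1)) = es ! ((i - 1 + (j + 1)) mod (i + j))"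
      by (rule rot_pow) (use ij in simp)
    also have "(i - 1 + (j + 1)) mod (i + j) = 0" using ij by simp
    finally show "(rho v ^^ (j + 1)) (es ! (i - 1)) \<in> incident E1 ends v"
      unfolding inc1 using mem1[of 0] ij by simp
    fix m' assume m': "0 < m'" "m' < j + 1"
    have "(rho v ^^ m') (es ! (i - 1)) = es ! ((i - 1 + m') mod (i + j))"
      by (rule rot_pow) (use ij in simp)
    also have "(i - 1 + m') mod (i + j) = i - 1 + m'" using m' ij by simp
    finally show "(rho v ^^ m') (es ! (i - 1)) \<notin> incident E1 ends v"
      unfolding inc1 using mem1[of "i - 1 + m'"] m' ij by simp
  qed simp
  also have "\<dots> = es ! 0"
  proof -
    have "(rho v ^^ (j + 1)) (es ! (i - 1)) = es ! ((i - 1 + (j + 1)) mod (i + j))"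
      by (rule rot_pow) (use ij in simp)
    also have "(i - 1 + (j + 1)) mod (i + j) = 0" using ij by simp
    finally show ?thesis by simp
  qed
  finally show "rho1 v (es ! (i - 1)) = es ! 0" .
  have "rho v (es ! (i + j - 1)) = es ! (Suc (i + j - 1) mod (i + j))"
    by (rule rot1) (use ij in simp)
  also have "Suc (i + j - 1) mod (i + j) = 0" using ij by simp
  finally show "rho v (es ! (i + j - 1)) = es ! 0" by simp
qed

lemma R2_mid: "i \<le> k \<Longrightarrow> k + 1 < i + j \<Longrightarrow> rho2 v (es ! k) = es ! (k + 1) \<and> rho v (es ! k) = es ! (k + 1)"
proof -
  assume k: "i \<le> k" "k + 1 < i + j"
  have r: "rho v (es ! k) = es ! (k + 1)" using rot1[of k] k by simp
  have "es ! (k + 1) \<in> incident E2 ends v" unfolding inc2 using mem2[of "k + 1"] k by simp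
  then show ?thesis using r restrict_one by metis
qed

lemma R2_last: "rho2 v (es ! (i + j - 1)) = es ! i" "rho v (es ! (i - 1)) = es ! i"
proof -
  have "rho2 v (es ! (i + j - 1)) = (rho v ^^ (i + 1)) (es ! (i + j - 1))"
  proof (rule restrict_at)
    have "(rho v ^^ (i + 1)) (es ! (i + j - 1)) = es ! ((i + j - 1 + (i + 1)) mod (i + j))"
      by (rule rot_pow) (use ij in simp)
    also have "(i + j - 1 + (i + 1)) mod (i + j) = i"
    proof -
      have "i + j - 1 + (i + 1) = i + (i + j)" using ij by simp
      then show ?thesis using ij by simp
    qed
    finally show "(rho v ^^ (i + 1)) (es ! (i + j - 1)) \<in> incident E2 ends v"
      unfolding inc2 using mem2[of i] ij by simp
    fix m' assume m': "0 < m'" "m' < i + 1"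
    have "(rho v ^^ m') (es ! (i + j - 1)) = es ! ((i + j - 1 + m') mod (i + j))"
      by (rule rot_pow) (use ij in simp)
    also have "(i + j - 1 + m') mod (i + j) = m' - 1"
    proof -
      have eq: "i + j - 1 + m' = (m' - 1) + (i + j)" using ij m' by simp
      have "((m' - 1) + (i + j)) mod (i + j) = (m' - 1) mod (i + j)" by (rule mod_add_self2)
      also have "\<dots> = m' - 1" using m' by simp
      finally show ?thesis unfolding eq .
    qed
    finally show "(rho v ^^ m') (es ! (i + j - 1)) \<notin> incident E2 ends v"
      unfolding inc2 using mem2[of "m' - 1"] m' ij by simp
  qed simp
  also have "\<dots> = es ! i"
  proof -
    have "(rho v ^^ (i + 1)) (es ! (i + j - 1)) = es ! ((i + j - 1 + (i + 1)) mod (i + j))"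
      by (rule rot_pow) (use ij in simp)
    also have "(i + j - 1 + (i + 1)) mod (i + j) = i"
    proof -
      have "i + j - 1 + (i + 1) = i + (i + j)" using ij by simp
      then show ?thesis using ij by simp
    qed
    finally show ?thesis by simp
  qed
  finally show "rho2 v (es ! (i + j - 1)) = es ! i" .
  have "rho v (es ! (i - 1)) = es ! (Suc (i - 1) mod (i + j))"
    by (rule rot1) (use ij in simp)
  also have "Suc (i - 1) mod (i + j) = i" using ij by simp
  finally show "rho v (es ! (i - 1)) = es ! i" by simp
qed

abbreviation "DD \<equiv> darts E ends"
abbreviation "DD1 \<equiv> darts E1 ends"
abbreviation "DD2 \<equiv> darts E2 ends"
abbreviation "fS \<equiv> face_step ends rho"
abbreviation "fS1 \<equiv> face_step ends rho1"
abbreviation "fS2 \<equiv> face_step ends rho2"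
abbreviation "da \<equiv> (es ! (i - 1), v)"
abbreviation "db \<equiv> (es ! (i + j - 1), v)"

lemma step_in:
  assumes "E' \<subseteq> E" "(e, u) \<in> darts E' ends" "r u e \<in> incident E' ends u"
  shows "face_step ends r (e, u) \<in> darts E' ends"
proof -
  have e': "r u e \<in> E'" "u \<in> ends (r u e)" using assms(3) unfolding incident_def by auto
  have "card (ends (r u e)) = 2" using grr(4) e' assms(1) by auto
  then have "other_end ends (r u e) u \<in> ends (r u e)" using other_end_prop(1) e'(2) by metis
  then show ?thesis unfolding face_step_eq darts_def using e' by simp
qed

lemma rho_inc: "(e, u) \<in> DD \<Longrightarrow> rho u e \<in> incident E ends u \<and> e \<in> incident E ends u \<and> u \<in> V"
proof -
  assume x: "(e, u) \<in> DD"
  then have e: "e \<in> E" "u \<in> ends e" unfolding darts_def by auto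
  then have uV: "u \<in> V" using grr(3) by auto
  have "e \<in> incident E ends u" using e unfolding incident_def by auto
  then show ?thesis using bij_betw_apply[OF rbij[OF uV]] uV by auto
qed

lemma f_D: "fS ` DD \<subseteq> DD"
proof
  fix y assume "y \<in> fS ` DD"
  then obtain e u where x: "(e, u) \<in> DD" "y = fS (e, u)" by auto
  show "y \<in> DD" unfolding x(2) by (rule step_in) (use x(1) rho_inc in auto)
qed

lemma f_inj: "inj_on fS DD"
proof (rule inj_onI)
  fix x y assume x: "x \<in> DD" and y: "y \<in> DD" and eq: "fS x = fS y"
  obtain e1 u1 where x1: "x = (e1, u1)" by (cases x)
  obtain e2 u2 where y1: "y = (e2, u2)" by (cases y)
  have r1: "rho u1 e1 \<in> incident E ends u1" "e1 \<in> incident E ends u1" "u1 \<in> V"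
    using rho_inc x x1 by auto
  have r2: "rho u2 e2 \<in> incident E ends u2" "e2 \<in> incident E ends u2" "u2 \<in> V"
    using rho_inc y y1 by auto
  have same: "rho u1 e1 = rho u2 e2" "other_end ends (rho u1 e1) u1 = other_end ends (rho u2 e2) u2"
    using eq unfolding x1 y1 face_step_eq by auto
  define e' where "e' = rho u1 e1"
  have c: "card (ends e') = 2" "u1 \<in> ends e'" "u2 \<in> ends e'"
    using r1 r2 same grr(4) unfolding e'_def incident_def by auto
  have "u1 = u2"
  proof (rule ccontr)
    assume ne: "u1 \<noteq> u2"
    have o: "other_end ends e' u1 = other_end ends e' u2" using same unfolding e'_def by simp
    have "ends e' = {u1, other_end ends e' u1}" "other_end ends e' u1 \<noteq> u1"
      using other_end_prop[where ends=ends and e="e'" and u=u1, OF c(1,2)] by auto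
    moreover have "ends e' = {u2, other_end ends e' u2}" "other_end ends e' u2 \<noteq> u2"
      using other_end_prop[where ends=ends and e="e'" and u=u2, OF c(1,3)] by auto
    ultimately show False using o ne by (metis doubleton_eq_iff)
  qed
  moreover have "e1 = e2"
    using bij_betw_imp_inj_on[OF rbij[OF r1(3)]] r1(2) r2(2) same(1) \<open>u1 = u2\<close>
    by (auto dest: inj_onD)
  ultimately show "x = y" using x1 y1 by simp
qed

lemma DD12: "DD1 \<union> DD2 = DD" "DD1 \<inter> DD2 = {}"
proof -
  have "DD1 \<union> DD2 = darts (E1 \<union> E2) ends" unfolding darts_def by auto
  then show "DD1 \<union> DD2 = DD" using E12(1) by simp
  have "DD1 \<inter> DD2 = darts (E1 \<inter> E2) ends" unfolding darts_def by auto
  then show "DD1 \<inter> DD2 = {}" using E12(2) unfolding darts_def by simp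
qed

lemma E1E: "E1 \<subseteq> E" "E2 \<subseteq> E" unfolding VE1 VE2 by auto

lemma a_in: "da \<in> DD1"
proof -
  have "es ! (i - 1) \<in> incident E1 ends v" unfolding inc1 using mem1[of "i - 1"] ij by simp
  then show ?thesis unfolding darts_def incident_def by simp
qed

lemma b_in: "db \<in> DD2"
proof -
  have "es ! (i + j - 1) \<in> incident E2 ends v" unfolding inc2 using mem2[of "i + j - 1"] ij by simp
  then show ?thesis unfolding darts_def incident_def by simp
qed

lemma f1_D1: assumes "x \<in> DD1" shows "fS1 x \<in> DD1 \<and> (x \<noteq> da \<longrightarrow> fS1 x = fS x)"
proof -
  obtain e u where x: "x = (e, u)" by (cases x)
  show ?thesis
  proof (cases "u = v")
    case False
    have "(e, u) \<in> darts {e \<in> E. ceV e \<in> ceV ` F1} ends" using assms x VE1(2) by simp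
    from R_nonv[OF this False]
    have r: "rho1 u e = rho u e" "rho1 u e \<in> incident E1 ends u" using VE1(2) by auto
    have "fS1 (e, u) \<in> DD1" by (rule step_in[OF E1E(1)]) (use assms x r in auto)
    then show ?thesis using r x by (simp add: face_step_eq)
  next
    case True
    then have "e \<in> incident E1 ends v" using assms x unfolding darts_def incident_def by auto
    then obtain k where k: "k < i" "e = es ! k" using F1_nth unfolding inc1 by blast
    show ?thesis
    proof (cases "k + 1 < i")
      case True
      have r: "rho1 v e = rho v e" "rho1 v e \<in> incident E1 ends v"
        using R1_mid[OF True] mem1[of "k + 1"] True k unfolding inc1 by auto
      have "fS1 (e, v) \<in> DD1" by (rule step_in[OF E1E(1)]) (use assms x r \<open>u = v\<close> in auto)
      then show ?thesis using r x \<open>u = v\<close> by (simp add: face_step_eq)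
    next
      case False
      then have "k = i - 1" using k by simp
      then have xa: "x = da" using x k \<open>u = v\<close> by simp
      have r: "rho1 v e \<in> incident E1 ends v"
        using R1_last(1) mem1[of 0] ij \<open>k = i - 1\<close> k unfolding inc1 by auto
      have "fS1 (e, v) \<in> DD1" by (rule step_in[OF E1E(1)]) (use assms x r \<open>u = v\<close> in auto)
      then show ?thesis using xa x \<open>u = v\<close> by simp
    qed
  qed
qed

lemma f2_D2: assumes "x \<in> DD2" shows "fS2 x \<in> DD2 \<and> (x \<noteq> db \<longrightarrow> fS2 x = fS x)"
proof -
  obtain e u where x: "x = (e, u)" by (cases x)
  show ?thesis
  proof (cases "u = v")
    case False
    have "(e, u) \<in> darts {e \<in> E. ceV e \<in> ceV ` F2} ends" using assms x VE2(2) by simp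
    from R_nonv[OF this False]
    have r: "rho2 u e = rho u e" "rho2 u e \<in> incident E2 ends u" using VE2(2) by auto
    have "fS2 (e, u) \<in> DD2" by (rule step_in[OF E1E(2)]) (use assms x r in auto)
    then show ?thesis using r x by (simp add: face_step_eq)
  next
    case True
    then have "e \<in> incident E2 ends v" using assms x unfolding darts_def incident_def by auto
    then obtain k where k: "i \<le> k" "k < i + j" "e = es ! k" using F2_nth unfolding inc2 by blast
    show ?thesis
    proof (cases "k + 1 < i + j")
      case True
      have r: "rho2 v e = rho v e" "rho2 v e \<in> incident E2 ends v"
        using R2_mid[OF k(1) True] mem2[of "k + 1"] True k unfolding inc2 by auto
      have "fS2 (e, v) \<in> DD2" by (rule step_in[OF E1E(2)]) (use assms x r \<open>u = v\<close> in auto)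
      then show ?thesis using r x \<open>u = v\<close> by (simp add: face_step_eq)
    next
      case False
      then have "k = i + j - 1" using k by simp
      then have xb: "x = db" using x k \<open>u = v\<close> by simp
      have r: "rho2 v e \<in> incident E2 ends v"
        using R2_last(1) mem2[of i] ij \<open>k = i + j - 1\<close> k unfolding inc2 by auto
      have "fS2 (e, v) \<in> DD2" by (rule step_in[OF E1E(2)]) (use assms x r \<open>u = v\<close> in auto)
      then show ?thesis using xb x \<open>u = v\<close> by simp
    qed
  qed
qed

lemma f1_a: "fS1 da = fS db"
  unfolding face_step_eq using R1_last by simp

lemma f2_b: "fS2 db = fS da"
  unfolding face_step_eq using R2_last by simp

lemma finDD: "finite DD"
proof -
  have "DD \<subseteq> E \<times> V" unfolding darts_def using grr(3) by auto
  then show ?thesis using grr(1,2) finite_subset by blast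
qed

lemma main_eq: "genus V E ends rho = genus V1 E1 ends rho1 + genus V2 E2 ends rho2"
proof -
  define g where "g x = (if x \<in> DD1 then fS1 x else fS2 x)" for x
  have bn: "db \<notin> DD1" using b_in DD12(2) by blast
  have an: "da \<notin> DD2" using a_in DD12(2) by blast
  have ga: "g da = fS db" using a_in f1_a unfolding g_def by simp
  have gb: "g db = fS da" using bn f2_b unfolding g_def by simp
  have gf: "g x = fS x" if "x \<in> DD - {da, db}" for x
  proof (cases "x \<in> DD1")
    case True then show ?thesis using f1_D1 that unfolding g_def by auto
  next
    case False
    then have "x \<in> DD2" using that DD12(1) by blast
    then show ?thesis using f2_D2 that False unfolding g_def by auto
  qed
  have g1z: "g z = fS1 z" "g z \<in> DD1" if "z \<in> DD1" for z
    using that f1_D1 unfolding g_def by auto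
  have g2z: "g z = fS2 z" "g z \<in> DD2" if "z \<in> DD2" for z
  proof -
    have "z \<notin> DD1" using that DD12(2) by blast
    then show "g z = fS2 z" "g z \<in> DD2" using that f2_D2 unfolding g_def by auto
  qed
  have g1: "g ` DD1 \<subseteq> DD1" using g1z by blast
  have g2: "g ` DD2 \<subseteq> DD2" using g2z by blast
  have M: "card (orb fS ` DD) + 1 = card (orb g ` DD1) + card (orb g ` DD2)"
    by (rule merge[OF finDD f_D f_inj DD12 a_in b_in ga gb gf g1 g2])
  have o1: "orb g ` DD1 = orb fS1 ` DD1"
  proof (rule image_cong[OF refl])
    fix x assume x: "x \<in> DD1"
    show "orb g x = orb fS1 x" by (rule orb_cong[of DD1]) (use g1z x in auto)
  qed
  have o2: "orb g ` DD2 = orb fS2 ` DD2"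
  proof (rule image_cong[OF refl])
    fix x assume x: "x \<in> DD2"
    show "orb g x = orb fS2 x" by (rule orb_cong[of DD2]) (use g2z x in auto)
  qed
  have C: "cyc E ends rho + 1 = cyc E1 ends rho1 + cyc E2 ends rho2"
    using M unfolding cyc_def face_orbit_orb o1 o2 .
  have C': "real (cyc E ends rho) + 1 = real (cyc E1 ends rho1) + real (cyc E2 ends rho2)"
    using arg_cong[OF C, of real] by simp
  have V': "real (card V1) + real (card V2) = real (card V) + 1"
    using arg_cong[OF cardV, of real] by simp
  have E': "real (card E) = real (card E1) + real (card E2)"
    using arg_cong[OF cardE, of real] by simp
  show ?thesis unfolding genus_def using C' V' E' by (simp add: field_simps)
qed

end


theorem lemma4p6:
  fixes V :: "'v set" and E :: "'e set" and ends :: "'e \<Rightarrow> 'v set"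
    and rho :: "'v \<Rightarrow> 'e \<Rightarrow> 'e" and v :: 'v and es :: "'e list" and i j :: nat
  assumes rg: "ribbon_graph V E ends rho"
    and vV: "v \<in> V"
    and ij: "i \<ge> 1" "j \<ge> 1"
    and es_len: "length es = i + j"
    and es_dist: "distinct es"
    and es_set: "set es = incident E ends v"
    and es_rot: "\<forall>k < i + j. rho v (es ! k) = es ! (Suc k mod (i + j))"
    and sep: "\<forall>k < i. \<forall>l. i \<le> l \<and> l < i + j \<longrightarrow>
               (\<forall>H \<in> v_components V E ends v. \<not> (es ! k \<in> snd H \<and> es ! l \<in> snd H))"
    and G1: "(V1, E1) = union_vcomps_containing V E ends v (set (take i es))"
    and G2: "(V2, E2) = union_vcomps_containing V E ends v (set (drop i es))"
  shows "genus V E ends rho =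
           genus V1 E1 ends (\<lambda>u. restrict_cyclic (incident E1 ends u) (rho u))
         + genus V2 E2 ends (\<lambda>u. restrict_cyclic (incident E2 ends u) (rho u))"
    using main_eq[OF rg vV ij es_len es_dist es_set es_rot sep G1 G2] .

end
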